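(* In the setting below, $\operatorname{length}_{\mathcal{O}}\Phi_{\lambda_A}(A) = (n-t)\,w_{\mathbf{a}}$.
   Context: Let $\mathcal{O}$ be a discrete valuation ring with uniformiser $\varpi$ and normalised valuation $\nu$. Let $2\le m\le n$, $t=m-1$, $P=\mathcal{O}[X_{m\times n}]$ (polynomial ring in the entries of an $m\times n$ matrix of indeterminates $X$), and $A=P/\mathrm{I}_m(X)$, where $\mathrm{I}_k$ denotes the ideal of $k\times k$ minors. Fix integers $0\le a_1\le\cdots\le a_t$, $D=\operatorname{diag}(\varpi^{a_1},\ldots,\varpi^{a_t})$, $\Delta=\det D$. Let $\mathbf{a}\in\mathcal{O}^{m\times n}$ have zero last row and top $t$ entries of column $j$ equal to the $r$-th column of $D$, where $1\le r\le t$, $r\equiv j\pmod t$. Let $\lambda_A\colon A\to\mathcal{O}$ be the $\mathcal{O}$-algebra map induced by $X_{ij}\mapsto\mathbf{a}_{ij}$. For $\mathfrak{p}=\ker\lambda_A$, $\Phi_{\lambda_A}(A)=\operatorname{tors}(\mathfrak{p}/\mathfrak{p}^2)$. $w_{\mathbf{a}}=\nu(\Delta)=\operatorname{length}_{\mathcal{O}}(\mathcal{O}/\mathrm{I}_t(\mathbf{a}))$. *)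

theory Defs
  imports "HOL-Library.Poly_Mapping" "HOL-Library.Extended_Nat" "HOL-Combinatorics.Permutations"
begin

definition is_dvr_uniformiser :: "'a::idom \<Rightarrow> bool" where
  "is_dvr_uniformiser uf \<longleftrightarrow> uf \<noteq> 0 \<and> \<not> uf dvd 1 \<and>
     (\<forall>x. x \<noteq> 0 \<longrightarrow> (\<exists>u k. u dvd 1 \<and> x = u * uf ^ k))"

text \<open>Polynomials in variables indexed by pairs (i,j) (0-based row/column) over 'a.\<close>
type_synonym 'a mpoly = "((nat \<times> nat) \<Rightarrow>\<^sub>0 nat) \<Rightarrow>\<^sub>0 'a"

definition Var :: "nat \<Rightarrow> nat \<Rightarrow> 'a::comm_ring_1 mpoly" where
  "Var i j = Poly_Mapping.single (Poly_Mapping.single (i, j) 1) 1"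

definition Const :: "'a::comm_ring_1 \<Rightarrow> 'a mpoly" where
  "Const c = Poly_Mapping.single 0 c"

definition eval_mpoly :: "(nat \<Rightarrow> nat \<Rightarrow> 'a::comm_ring_1) \<Rightarrow> 'a mpoly \<Rightarrow> 'a" where
  "eval_mpoly a f = (\<Sum>mo\<in>Poly_Mapping.keys f. Poly_Mapping.lookup f mo *
      (\<Prod>v\<in>Poly_Mapping.keys mo. a (fst v) (snd v) ^ Poly_Mapping.lookup mo v))"

text \<open>The polynomial ring P = O[X_{m x n}] as a subset (only variables with i<m, j<n).\<close>
definition poly_ring :: "nat \<Rightarrow> nat \<Rightarrow> 'a::comm_ring_1 mpoly set" where
  "poly_ring m n = {f. \<forall>mo\<in>Poly_Mapping.keys f. Poly_Mapping.keys mo \<subseteq> {..<m} \<times> {..<n}}"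

definition minor :: "nat \<Rightarrow> (nat \<Rightarrow> nat) \<Rightarrow> (nat \<Rightarrow> nat) \<Rightarrow> 'a::comm_ring_1 mpoly" where
  "minor k rs cs = (\<Sum>p\<in>{p. p permutes {..<k}}.
      of_int (sign p) * (\<Prod>i<k. Var (rs i) (cs (p i))))"

definition minors :: "nat \<Rightarrow> nat \<Rightarrow> nat \<Rightarrow> 'a::comm_ring_1 mpoly set" where
  "minors m n k = {minor k rs cs | rs cs.
      strict_mono_on {..<k} rs \<and> rs ` {..<k} \<subseteq> {..<m} \<and>
      strict_mono_on {..<k} cs \<and> cs ` {..<k} \<subseteq> {..<n}}"

definition gen_ideal :: "'a::comm_ring_1 set \<Rightarrow> 'a set \<Rightarrow> 'a set" where
  "gen_ideal R S = {x. \<exists>F c. finite F \<and> F \<subseteq> S \<and> (\<forall>s\<in>F. c s \<in> R) \<and> x = (\<Sum>s\<in>F. c s * s)}"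

text \<open>The matrix a (0-based): rows i < t = m-1, column j has the (j mod t)-th column of D.\<close>
definition amat :: "'a::comm_ring_1 \<Rightarrow> nat \<Rightarrow> (nat \<Rightarrow> nat) \<Rightarrow> nat \<Rightarrow> nat \<Rightarrow> 'a" where
  "amat uf m as i j = (if i < m - 1 \<and> i = j mod (m - 1) then uf ^ as i else 0)"

text \<open>Q = ker(lambda_P) \<subseteq> P; then p = Q / I_m, p^2 = (Q^2 + I_m)/I_m and
  p/p^2 = Q/(Q^2 + I_m).\<close>
definition kerQ :: "nat \<Rightarrow> nat \<Rightarrow> (nat \<Rightarrow> nat \<Rightarrow> 'a::comm_ring_1) \<Rightarrow> 'a mpoly set" where
  "kerQ m n a = {f \<in> poly_ring m n. eval_mpoly a f = 0}"

definition denomN :: "nat \<Rightarrow> nat \<Rightarrow> (nat \<Rightarrow> nat \<Rightarrow> 'a::comm_ring_1) \<Rightarrow> 'a mpoly set" where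
  "denomN m n a = gen_ideal (poly_ring m n)
     ({f * g | f g. f \<in> kerQ m n a \<and> g \<in> kerQ m n a} \<union> minors m n m)"

text \<open>Preimage in Q of the O-torsion of Q/N.\<close>
definition torsT :: "nat \<Rightarrow> nat \<Rightarrow> (nat \<Rightarrow> nat \<Rightarrow> 'a::comm_ring_1) \<Rightarrow> 'a mpoly set" where
  "torsT m n a = {x \<in> kerQ m n a. \<exists>c. c \<noteq> 0 \<and> Const c * x \<in> denomN m n a}"

text \<open>O-submodules L with N \<subseteq> L \<subseteq> T (i.e. submodules of T/N).\<close>
definition between_submod :: "'a::comm_ring_1 mpoly set \<Rightarrow> 'a mpoly set \<Rightarrow> 'a mpoly set \<Rightarrow> bool" where
  "between_submod N T L \<longleftrightarrow> N \<subseteq> L \<and> L \<subseteq> T \<and>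
     (\<forall>x\<in>L. \<forall>y\<in>L. x + y \<in> L) \<and> (\<forall>c. \<forall>x\<in>L. Const c * x \<in> L)"

definition quot_length :: "'a::comm_ring_1 mpoly set \<Rightarrow> 'a mpoly set \<Rightarrow> enat" where
  "quot_length N T = Sup {enat k | k. \<exists>L. (\<forall>i\<le>k. between_submod N T (L i)) \<and>
      L 0 = N \<and> L k = T \<and> (\<forall>i<k. L i \<subset> L (Suc i))}"

end

theory Submission
  imports Defs "Jordan_Normal_Form.Determinant"
begin

definition monP :: "((nat \<times> nat) \<Rightarrow> 'a::comm_ring_1 poly) \<Rightarrow> ((nat \<times> nat) \<Rightarrow>\<^sub>0 nat) \<Rightarrow> 'a poly" where
  "monP X mo = (\<Prod>v\<in>Poly_Mapping.keys mo. X v ^ Poly_Mapping.lookup mo v)"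

definition EP :: "((nat \<times> nat) \<Rightarrow> 'a::comm_ring_1 poly) \<Rightarrow> 'a mpoly \<Rightarrow> 'a poly" where
  "EP X f = (\<Sum>mo\<in>Poly_Mapping.keys f. [:Poly_Mapping.lookup f mo:] * monP X mo)"

lemma monP_superset:
  assumes "finite S" "Poly_Mapping.keys mo \<subseteq> S"
  shows "monP X mo = (\<Prod>v\<in>S. X v ^ Poly_Mapping.lookup mo v)"
  unfolding monP_def
  by (rule prod.mono_neutral_left) (use assms in \<open>auto simp: in_keys_iff\<close>)

lemma monP_add: "monP X (k + l) = monP X k * monP X l"
proof -
  let ?S = "Poly_Mapping.keys k \<union> Poly_Mapping.keys l"
  have "monP X (k + l) = (\<Prod>v\<in>?S. X v ^ Poly_Mapping.lookup (k + l) v)"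
    by (rule monP_superset) (auto dest: subsetD[OF keys_add])
  also have "\<dots> = (\<Prod>v\<in>?S. X v ^ Poly_Mapping.lookup k v * X v ^ Poly_Mapping.lookup l v)"
    by (simp add: lookup_add power_add)
  also have "\<dots> = monP X k * monP X l"
    by (simp add: prod.distrib monP_superset[of ?S])
  finally show ?thesis .
qed

lemma monP_zero [simp]: "monP X 0 = 1"
  by (simp add: monP_def)

lemma EP_superset:
  assumes "finite S" "Poly_Mapping.keys f \<subseteq> S"
  shows "EP X f = (\<Sum>mo\<in>S. [:Poly_Mapping.lookup f mo:] * monP X mo)"
  unfolding EP_def
  by (rule sum.mono_neutral_left) (use assms in \<open>auto simp: in_keys_iff\<close>)

lemma EP_add: "EP X (f + g) = EP X f + EP X g"
proof -
  let ?S = "Poly_Mapping.keys f \<union> Poly_Mapping.keys g"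
  have "EP X (f + g) = (\<Sum>mo\<in>?S. [:Poly_Mapping.lookup (f + g) mo:] * monP X mo)"
    by (rule EP_superset) (auto dest: subsetD[OF keys_add])
  also have "\<dots> = (\<Sum>mo\<in>?S. [:Poly_Mapping.lookup f mo:] * monP X mo + [:Poly_Mapping.lookup g mo:] * monP X mo)"
    by (simp add: lookup_add distrib_right smult_add_left)
  also have "\<dots> = EP X f + EP X g"
    by (simp add: sum.distrib EP_superset[of ?S])
  finally show ?thesis .
qed

lemma EP_zero [simp]: "EP X 0 = 0"
  by (simp add: EP_def)

lemma EP_uminus: "EP X (- f) = - EP X f"
  by (metis EP_add EP_zero add_eq_0_iff2 neg_eq_iff_add_eq_0)

lemma EP_diff: "EP X (f - g) = EP X f - EP X g"
  by (metis EP_add EP_uminus diff_conv_add_uminus)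

lemma EP_sum: "EP X (sum g A) = (\<Sum>x\<in>A. EP X (g x))"
  by (induction A rule: infinite_finite_induct) (auto simp: EP_add)

lemma EP_single: "EP X (Poly_Mapping.single mo c) = [:c:] * monP X mo"
  by (simp add: EP_def)

lemma mpoly_expand: "f = (\<Sum>k\<in>Poly_Mapping.keys f. Poly_Mapping.single k (Poly_Mapping.lookup f k))"
proof (rule poly_mapping_eqI)
  fix x
  show "Poly_Mapping.lookup f x = Poly_Mapping.lookup (\<Sum>k\<in>Poly_Mapping.keys f. Poly_Mapping.single k (Poly_Mapping.lookup f k)) x"
    by (simp add: lookup_sum lookup_single when_def in_keys_iff)
qed

lemma EP_mult_single: "EP X (Poly_Mapping.single k a * Poly_Mapping.single l b) =
   EP X (Poly_Mapping.single k a) * EP X (Poly_Mapping.single l b)"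
  by (simp add: mult_single EP_single monP_add algebra_simps)

lemma EP_mult: "EP X (f * g) = EP X f * EP X g"
proof -
  have "f * g = (\<Sum>k\<in>Poly_Mapping.keys f. \<Sum>l\<in>Poly_Mapping.keys g.
      Poly_Mapping.single k (Poly_Mapping.lookup f k) * Poly_Mapping.single l (Poly_Mapping.lookup g l))"
    by (subst (1) mpoly_expand[of f], subst (1) mpoly_expand[of g]) (simp add: sum_product)
  hence "EP X (f * g) = (\<Sum>k\<in>Poly_Mapping.keys f. \<Sum>l\<in>Poly_Mapping.keys g.
      EP X (Poly_Mapping.single k (Poly_Mapping.lookup f k)) * EP X (Poly_Mapping.single l (Poly_Mapping.lookup g l)))"
    by (simp add: EP_sum EP_mult_single)
  also have "\<dots> = EP X f * EP X g"
    by (subst (3) mpoly_expand[of f], subst (3) mpoly_expand[of g]) (simp add: EP_sum sum_product)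
  finally show ?thesis .
qed

lemma EP_Const [simp]: "EP X (Const c) = [:c:]"
  by (simp add: Const_def EP_single)

lemma EP_Var [simp]: "EP X (Var i j) = X (i, j)"
  by (simp add: Var_def EP_single monP_def)

lemma EP_one [simp]: "EP X 1 = 1"
  by (metis EP_Const Const_def pCons_one single_one)

lemma EP_prod: "EP X (prod g A) = (\<Prod>x\<in>A. EP X (g x))"
  by (induction A rule: infinite_finite_induct) (auto simp: EP_mult)

lemma EP_power: "EP X (f ^ k) = EP X f ^ k"
  by (induction k) (auto simp: EP_mult)

lemma EP_of_int [simp]: "EP X (of_int z) = of_int z"
proof -
  have "(of_int z :: 'a mpoly) = Const (of_int z)" by (simp add: Const_def)
  then show ?thesis by (simp add: of_int_poly)
qed

lemma eval_EP:
  assumes "\<And>v. poly (X v) 0 = a (fst v) (snd v)"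
  shows "eval_mpoly a f = poly (EP X f) 0"
  unfolding eval_mpoly_def EP_def monP_def
  by (simp add: poly_sum poly_prod poly_power assms)


lemma Const_add: "Const (x + y) = Const x + Const y"
  by (simp add: Const_def single_add)
lemma Const_mult: "Const (x * y) = Const x * Const y"
  by (simp add: Const_def mult_single)
lemma Const_zero [simp]: "Const 0 = 0"
  by (simp add: Const_def)
lemma Const_one: "Const 1 = 1"
  by (simp add: Const_def)
lemma Const_uminus: "Const (- x) = - Const x"
  by (simp add: Const_def single_uminus)
lemma Const_diff: "Const (x - y) = Const x - Const y"
  by (simp add: Const_def single_diff)

section \<open>Evaluation and derivative\<close>

definition X0 :: "(nat \<Rightarrow> nat \<Rightarrow> 'a::comm_ring_1) \<Rightarrow> nat \<times> nat \<Rightarrow> 'a poly" where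
  "X0 a v = [:a (fst v) (snd v):]"

definition Xd :: "(nat \<Rightarrow> nat \<Rightarrow> 'a::comm_ring_1) \<Rightarrow> nat \<times> nat \<Rightarrow> nat \<times> nat \<Rightarrow> 'a poly" where
  "Xd a w v = [:a (fst v) (snd v), (if v = w then 1 else 0):]"

definition dd :: "(nat \<Rightarrow> nat \<Rightarrow> 'a::comm_ring_1) \<Rightarrow> nat \<times> nat \<Rightarrow> 'a mpoly \<Rightarrow> 'a" where
  "dd a w f = coeff (EP (Xd a w) f) 1"

lemma eval_Xd: "eval_mpoly a f = coeff (EP (Xd a w) f) 0"
  by (subst eval_EP[of "Xd a w"]) (auto simp: Xd_def poly_0_coeff_0)

lemma eval_X0: "eval_mpoly a f = poly (EP (X0 a) f) 0"
  by (subst eval_EP[of "X0 a"]) (auto simp: X0_def)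

lemma eval_add: "eval_mpoly a (f + g) = eval_mpoly a f + eval_mpoly a g"
  by (simp add: eval_X0 EP_add)
lemma eval_diff: "eval_mpoly a (f - g) = eval_mpoly a f - eval_mpoly a g"
  by (simp add: eval_X0 EP_diff)
lemma eval_uminus: "eval_mpoly a (- f) = - eval_mpoly a f"
  by (simp add: eval_X0 EP_uminus)
lemma eval_mult: "eval_mpoly a (f * g) = eval_mpoly a f * eval_mpoly a g"
  by (simp add: eval_X0 EP_mult)
lemma eval_sum: "eval_mpoly a (sum g A) = (\<Sum>x\<in>A. eval_mpoly a (g x))"
  by (simp add: eval_X0 EP_sum poly_sum)
lemma eval_prod: "eval_mpoly a (prod g A) = (\<Prod>x\<in>A. eval_mpoly a (g x))"
  by (simp add: eval_X0 EP_prod poly_prod)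
lemma eval_Const [simp]: "eval_mpoly a (Const c) = c"
  by (simp add: eval_X0)
lemma eval_Var [simp]: "eval_mpoly a (Var i j) = a i j"
  by (simp add: eval_X0 X0_def)
lemma eval_zero [simp]: "eval_mpoly a 0 = 0"
  by (simp add: eval_X0)
lemma eval_of_int [simp]: "eval_mpoly a (of_int z) = of_int z"
  by (simp add: eval_X0)

lemma dd_add: "dd a w (f + g) = dd a w f + dd a w g"
  by (simp add: dd_def EP_add)
lemma dd_diff: "dd a w (f - g) = dd a w f - dd a w g"
  by (simp add: dd_def EP_diff)
lemma dd_uminus: "dd a w (- f) = - dd a w f"
  by (simp add: dd_def EP_uminus)
lemma dd_zero [simp]: "dd a w 0 = 0"
  by (simp add: dd_def)
lemma dd_sum: "dd a w (sum g A) = (\<Sum>x\<in>A. dd a w (g x))"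
  by (simp add: dd_def EP_sum coeff_sum)
lemma dd_mult: "dd a w (f * g) = eval_mpoly a f * dd a w g + eval_mpoly a g * dd a w f"
proof -
  have "dd a w (f * g) = (\<Sum>i\<le>1. coeff (EP (Xd a w) f) i * coeff (EP (Xd a w) g) (1 - i))"
    by (simp add: dd_def EP_mult coeff_mult)
  also have "\<dots> = coeff (EP (Xd a w) f) 0 * coeff (EP (Xd a w) g) 1 + coeff (EP (Xd a w) f) 1 * coeff (EP (Xd a w) g) 0"
    by (simp add: atMost_Suc)
  finally show ?thesis by (simp add: dd_def eval_Xd[of a _ w] mult.commute)
qed
lemma dd_Const [simp]: "dd a w (Const c) = 0"
  by (simp add: dd_def)
lemma dd_Var: "dd a w (Var i j) = (if (i, j) = w then 1 else 0)"
  by (simp add: dd_def Xd_def)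
lemma dd_Const_mult: "dd a w (Const c * f) = c * dd a w f"
  by (simp add: dd_mult)
lemma dd_of_int [simp]: "dd a w (of_int z) = 0"
proof -
  have "(of_int z :: 'a mpoly) = Const (of_int z)" by (simp add: Const_def)
  then show ?thesis by simp
qed

lemma P_Const: "Const c \<in> poly_ring m n"
  by (simp add: poly_ring_def Const_def)
lemma P_zero: "0 \<in> poly_ring m n"
  by (simp add: poly_ring_def)
lemma P_one: "1 \<in> poly_ring m n"
  by (simp add: poly_ring_def)
lemma P_Var: "i < m \<Longrightarrow> j < n \<Longrightarrow> Var i j \<in> poly_ring m n"
  by (simp add: poly_ring_def Var_def)
lemma P_add: "f \<in> poly_ring m n \<Longrightarrow> g \<in> poly_ring m n \<Longrightarrow> f + g \<in> poly_ring m n"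
  unfolding poly_ring_def
proof (intro CollectI ballI)
  fix mo assume "f \<in> {f. \<forall>mo\<in>Poly_Mapping.keys f. Poly_Mapping.keys mo \<subseteq> {..<m} \<times> {..<n}}"
    "g \<in> {f. \<forall>mo\<in>Poly_Mapping.keys f. Poly_Mapping.keys mo \<subseteq> {..<m} \<times> {..<n}}"
    "mo \<in> Poly_Mapping.keys (f + g)"
  moreover have "mo \<in> Poly_Mapping.keys f \<union> Poly_Mapping.keys g" using calculation(3) keys_add by fast
  ultimately show "Poly_Mapping.keys mo \<subseteq> {..<m} \<times> {..<n}" by auto
qed
lemma P_uminus: "f \<in> poly_ring m n \<Longrightarrow> - f \<in> poly_ring m n"
  unfolding poly_ring_def by simp
lemma P_diff: "f \<in> poly_ring m n \<Longrightarrow> g \<in> poly_ring m n \<Longrightarrow> f - g \<in> poly_ring m n"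
  by (metis P_add P_uminus diff_conv_add_uminus)
lemma P_mult: "f \<in> poly_ring m n \<Longrightarrow> g \<in> poly_ring m n \<Longrightarrow> f * g \<in> poly_ring m n"
  unfolding poly_ring_def
proof (intro CollectI ballI)
  fix mo assume f: "f \<in> {f. \<forall>mo\<in>Poly_Mapping.keys f. Poly_Mapping.keys mo \<subseteq> {..<m} \<times> {..<n}}"
    and g: "g \<in> {f. \<forall>mo\<in>Poly_Mapping.keys f. Poly_Mapping.keys mo \<subseteq> {..<m} \<times> {..<n}}"
    and mo: "mo \<in> Poly_Mapping.keys (f * g)"
  then obtain k l where kl: "mo = k + l" "k \<in> Poly_Mapping.keys f" "l \<in> Poly_Mapping.keys g"
    using keys_mult by blast
  have "Poly_Mapping.keys mo \<subseteq> Poly_Mapping.keys k \<union> Poly_Mapping.keys l"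
    using kl(1) keys_add by simp
  moreover have "Poly_Mapping.keys k \<subseteq> {..<m} \<times> {..<n}" using f kl(2) by simp
  moreover have "Poly_Mapping.keys l \<subseteq> {..<m} \<times> {..<n}" using g kl(3) by simp
  ultimately show "Poly_Mapping.keys mo \<subseteq> {..<m} \<times> {..<n}" by blast
qed
lemma P_sum: "(\<And>x. x \<in> A \<Longrightarrow> g x \<in> poly_ring m n) \<Longrightarrow> sum g A \<in> poly_ring m n"
  by (induction A rule: infinite_finite_induct) (auto simp: P_zero P_add)
lemma P_prod: "(\<And>x. x \<in> A \<Longrightarrow> g x \<in> poly_ring m n) \<Longrightarrow> prod g A \<in> poly_ring m n"
  by (induction A rule: infinite_finite_induct) (auto simp: P_one P_mult)
lemma P_of_int: "of_int z \<in> poly_ring m n"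
proof -
  have "(of_int z :: 'a mpoly) = Const (of_int z)" by (simp add: Const_def)
  then show ?thesis by (simp add: P_Const)
qed

section \<open>Generated ideals\<close>

lemma gi_zero: "0 \<in> gen_ideal R S"
  unfolding gen_ideal_def by (rule CollectI, rule exI[of _ "{}"]) auto

lemma gi_gen: "s \<in> S \<Longrightarrow> r \<in> R \<Longrightarrow> r * s \<in> gen_ideal R S"
  unfolding gen_ideal_def by (rule CollectI, rule exI[of _ "{s}"], rule exI[of _ "\<lambda>_. r"]) auto

lemma gi_add:
  assumes "x \<in> gen_ideal R S" "y \<in> gen_ideal R S"
    and R0: "0 \<in> R" and Radd: "\<And>u v. u \<in> R \<Longrightarrow> v \<in> R \<Longrightarrow> u + v \<in> R"
  shows "x + y \<in> gen_ideal R S"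
proof -
  obtain F1 c1 where 1: "finite F1" "F1 \<subseteq> S" "\<forall>s\<in>F1. c1 s \<in> R" "x = (\<Sum>s\<in>F1. c1 s * s)"
    using assms(1) unfolding gen_ideal_def by blast
  obtain F2 c2 where 2: "finite F2" "F2 \<subseteq> S" "\<forall>s\<in>F2. c2 s \<in> R" "y = (\<Sum>s\<in>F2. c2 s * s)"
    using assms(2) unfolding gen_ideal_def by blast
  define e1 where "e1 s = (if s \<in> F1 then c1 s else 0)" for s
  define e2 where "e2 s = (if s \<in> F2 then c2 s else 0)" for s
  have s1: "(\<Sum>s\<in>F1 \<union> F2. e1 s * s) = x"
    unfolding 1(4) by (rule sum.mono_neutral_cong_right) (use 1 2 in \<open>auto simp: e1_def\<close>)
  have s2: "(\<Sum>s\<in>F1 \<union> F2. e2 s * s) = y"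
    unfolding 2(4) by (rule sum.mono_neutral_cong_right) (use 1 2 in \<open>auto simp: e2_def\<close>)
  have "x + y = (\<Sum>s\<in>F1 \<union> F2. (e1 s + e2 s) * s)"
    by (simp add: distrib_right sum.distrib s1 s2)
  moreover have "\<forall>s\<in>F1 \<union> F2. e1 s + e2 s \<in> R"
    using 1 2 R0 Radd by (auto simp: e1_def e2_def)
  ultimately show ?thesis unfolding gen_ideal_def
    by (intro CollectI exI[of _ "F1 \<union> F2"] exI[of _ "\<lambda>s. e1 s + e2 s"]) (use 1 2 in auto)
qed

lemma gi_mult:
  assumes "x \<in> gen_ideal R S" "r \<in> R"
    and Rmult: "\<And>u v. u \<in> R \<Longrightarrow> v \<in> R \<Longrightarrow> u * v \<in> R"
  shows "r * x \<in> gen_ideal R S"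
proof -
  obtain F c where 1: "finite F" "F \<subseteq> S" "\<forall>s\<in>F. c s \<in> R" "x = (\<Sum>s\<in>F. c s * s)"
    using assms(1) unfolding gen_ideal_def by blast
  have "r * x = (\<Sum>s\<in>F. (r * c s) * s)"
    by (simp add: 1(4) sum_distrib_left mult.assoc)
  then show ?thesis unfolding gen_ideal_def
    by (intro CollectI exI[of _ F] exI[of _ "\<lambda>s. r * c s"]) (use 1 assms(2) Rmult in auto)
qed

lemma gi_mono: "S \<subseteq> S' \<Longrightarrow> gen_ideal R S \<subseteq> gen_ideal R S'"
  unfolding gen_ideal_def by (smt (verit) Collect_mono order_trans)

lemma gi_induct:
  assumes "x \<in> gen_ideal R S"
    and "Pr 0" and "\<And>u v. Pr u \<Longrightarrow> Pr v \<Longrightarrow> Pr (u + v)"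
    and "\<And>c s. c \<in> R \<Longrightarrow> s \<in> S \<Longrightarrow> Pr (c * s)"
  shows "Pr x"
proof -
  obtain F c where 1: "finite F" "F \<subseteq> S" "\<forall>s\<in>F. c s \<in> R" "x = (\<Sum>s\<in>F. c s * s)"
    using assms(1) unfolding gen_ideal_def by blast
  have "Pr (\<Sum>s\<in>F. c s * s)" using 1(1-3)
    by (induction F rule: finite_induct) (auto intro: assms(2,3,4))
  then show ?thesis using 1(4) by simp
qed

abbreviation PR where "PR m n \<equiv> poly_ring m n"

lemma giP_add: "x \<in> gen_ideal (PR m n) S \<Longrightarrow> y \<in> gen_ideal (PR m n) S \<Longrightarrow> x + y \<in> gen_ideal (PR m n) S"
  by (rule gi_add) (auto simp: P_zero P_add)
lemma giP_mult: "x \<in> gen_ideal (PR m n) S \<Longrightarrow> r \<in> PR m n \<Longrightarrow> r * x \<in> gen_ideal (PR m n) S"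
  by (rule gi_mult) (auto simp: P_mult)
lemma giP_uminus: "x \<in> gen_ideal (PR m n) S \<Longrightarrow> - x \<in> gen_ideal (PR m n) S"
proof -
  assume x: "x \<in> gen_ideal (PR m n) S"
  have "- 1 \<in> PR m n" by (rule P_uminus[OF P_one])
  from giP_mult[OF x this] show ?thesis by simp
qed
lemma giP_diff: "x \<in> gen_ideal (PR m n) S \<Longrightarrow> y \<in> gen_ideal (PR m n) S \<Longrightarrow> x - y \<in> gen_ideal (PR m n) S"
  by (metis giP_add giP_uminus diff_conv_add_uminus)
lemma giP_sum: "(\<And>x. x \<in> A \<Longrightarrow> g x \<in> gen_ideal (PR m n) S) \<Longrightarrow> sum g A \<in> gen_ideal (PR m n) S"
  by (induction A rule: infinite_finite_induct) (auto simp: gi_zero giP_add)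

section \<open>Taylor expansion\<close>

definition GR :: "nat \<Rightarrow> nat \<Rightarrow> (nat \<times> nat) set" where "GR m n = {..<m} \<times> {..<n}"

definition Yv :: "(nat \<Rightarrow> nat \<Rightarrow> 'a::comm_ring_1) \<Rightarrow> nat \<times> nat \<Rightarrow> 'a mpoly" where
  "Yv a v = Var (fst v) (snd v) - Const (a (fst v) (snd v))"

definition Lin :: "nat \<Rightarrow> nat \<Rightarrow> (nat \<Rightarrow> nat \<Rightarrow> 'a::comm_ring_1) \<Rightarrow> 'a mpoly \<Rightarrow> 'a mpoly" where
  "Lin m n a f = (\<Sum>v\<in>GR m n. Const (dd a v f) * Yv a v)"

definition QQ :: "nat \<Rightarrow> nat \<Rightarrow> (nat \<Rightarrow> nat \<Rightarrow> 'a::comm_ring_1) \<Rightarrow> 'a mpoly set" where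
  "QQ m n a = {f * g | f g. f \<in> kerQ m n a \<and> g \<in> kerQ m n a}"

definition JJ :: "nat \<Rightarrow> nat \<Rightarrow> (nat \<Rightarrow> nat \<Rightarrow> 'a::comm_ring_1) \<Rightarrow> 'a mpoly set" where
  "JJ m n a = gen_ideal (poly_ring m n) (QQ m n a)"

lemma finite_GR [simp]: "finite (GR m n)"
  by (simp add: GR_def)

lemma Yv_P: "v \<in> GR m n \<Longrightarrow> Yv a v \<in> poly_ring m n"
  by (auto simp: Yv_def GR_def intro!: P_diff P_Var P_Const)
lemma eval_Yv [simp]: "eval_mpoly a (Yv a v) = 0"
  by (simp add: Yv_def eval_diff)
lemma dd_Yv: "dd a w (Yv a v) = (if v = w then 1 else 0)"
  by (cases v) (simp add: Yv_def dd_diff dd_Var)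

lemma Lin_P: "Lin m n a f \<in> poly_ring m n"
  unfolding Lin_def by (auto intro!: P_sum P_mult P_Const Yv_P)
lemma eval_Lin: "eval_mpoly a (Lin m n a f) = 0"
  unfolding Lin_def by (simp add: eval_sum eval_mult)
lemma Lin_kerQ: "Lin m n a f \<in> kerQ m n a"
  by (simp add: kerQ_def Lin_P eval_Lin)
lemma Lin_add: "Lin m n a (f + g) = Lin m n a f + Lin m n a g"
  unfolding Lin_def by (simp add: dd_add Const_add distrib_right sum.distrib)
lemma Lin_mult: "Lin m n a (f * g) = Const (eval_mpoly a f) * Lin m n a g + Const (eval_mpoly a g) * Lin m n a f"
  unfolding Lin_def by (simp add: dd_mult Const_add Const_mult distrib_right sum.distrib sum_distrib_left mult.assoc)
lemma Lin_Const: "Lin m n a (Const c) = 0"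
  unfolding Lin_def by simp
lemma Lin_Var: "(i, j) \<in> GR m n \<Longrightarrow> Lin m n a (Var i j) = Yv a (i, j)"
proof -
  assume ij: "(i, j) \<in> GR m n"
  have "Lin m n a (Var i j) = (\<Sum>v\<in>GR m n. if (i, j) = v then Yv a v else 0)"
    unfolding Lin_def dd_Var by (rule sum.cong) (auto simp: Const_one)
  also have "\<dots> = Yv a (i, j)" using ij by (simp add: sum.delta)
  finally show ?thesis .
qed

lemma JJ_add: "x \<in> JJ m n a \<Longrightarrow> y \<in> JJ m n a \<Longrightarrow> x + y \<in> JJ m n a"
  unfolding JJ_def by (rule giP_add)
lemma JJ_mult: "x \<in> JJ m n a \<Longrightarrow> r \<in> poly_ring m n \<Longrightarrow> r * x \<in> JJ m n a"
  unfolding JJ_def by (rule giP_mult)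
lemma JJ_QQ: "f \<in> kerQ m n a \<Longrightarrow> g \<in> kerQ m n a \<Longrightarrow> f * g \<in> JJ m n a"
  unfolding JJ_def using gi_gen[of "f * g" "QQ m n a" 1 "poly_ring m n"] P_one
  by (auto simp: QQ_def)
lemma JJ_zero: "0 \<in> JJ m n a"
  unfolding JJ_def by (rule gi_zero)

definition good :: "nat \<Rightarrow> nat \<Rightarrow> (nat \<Rightarrow> nat \<Rightarrow> 'a::comm_ring_1) \<Rightarrow> 'a mpoly \<Rightarrow> bool" where
  "good m n a f \<longleftrightarrow> f \<in> poly_ring m n \<and> f - Const (eval_mpoly a f) - Lin m n a f \<in> JJ m n a"

lemma good_Const: "good m n a (Const c)"
  by (simp add: good_def P_Const Lin_Const JJ_zero)
lemma good_Var: "i < m \<Longrightarrow> j < n \<Longrightarrow> good m n a (Var i j)"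
  by (simp add: good_def P_Var Lin_Var GR_def Yv_def JJ_zero)
lemma good_add: "good m n a f \<Longrightarrow> good m n a g \<Longrightarrow> good m n a (f + g)"
  unfolding good_def
proof (intro conjI)
  assume f: "f \<in> poly_ring m n \<and> f - Const (eval_mpoly a f) - Lin m n a f \<in> JJ m n a"
    and g: "g \<in> poly_ring m n \<and> g - Const (eval_mpoly a g) - Lin m n a g \<in> JJ m n a"
  show "f + g \<in> poly_ring m n" using f g by (simp add: P_add)
  have "f + g - Const (eval_mpoly a (f + g)) - Lin m n a (f + g) =
    (f - Const (eval_mpoly a f) - Lin m n a f) + (g - Const (eval_mpoly a g) - Lin m n a g)"
    by (simp add: eval_add Const_add Lin_add algebra_simps)
  then show "f + g - Const (eval_mpoly a (f + g)) - Lin m n a (f + g) \<in> JJ m n a"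
    using f g JJ_add by metis
qed
lemma good_mult: "good m n a f \<Longrightarrow> good m n a g \<Longrightarrow> good m n a (f * g)"
  unfolding good_def
proof (intro conjI)
  assume f: "f \<in> poly_ring m n \<and> f - Const (eval_mpoly a f) - Lin m n a f \<in> JJ m n a"
    and g: "g \<in> poly_ring m n \<and> g - Const (eval_mpoly a g) - Lin m n a g \<in> JJ m n a"
  show "f * g \<in> poly_ring m n" using f g by (simp add: P_mult)
  define rf where "rf = f - Const (eval_mpoly a f) - Lin m n a f"
  define rg where "rg = g - Const (eval_mpoly a g) - Lin m n a g"
  have rf: "rf \<in> JJ m n a" and rg: "rg \<in> JJ m n a" using f g by (auto simp: rf_def rg_def)
  have fe: "f = Const (eval_mpoly a f) + Lin m n a f + rf" by (simp add: rf_def)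
  have ge: "g = Const (eval_mpoly a g) + Lin m n a g + rg" by (simp add: rg_def)
  have "f * g - Const (eval_mpoly a (f * g)) - Lin m n a (f * g) =
     Const (eval_mpoly a f) * rg + Lin m n a f * Lin m n a g + Lin m n a f * rg + g * rf"
  proof -
    have id: "\<And>A B C D E F :: 'a mpoly. (A + B + C) * (D + E + F) - A * D - (A * E + D * B) =
        A * F + B * E + B * F + (D + E + F) * C"
      by (simp add: algebra_simps)
    have "(Const (eval_mpoly a f) + Lin m n a f + rf) * (Const (eval_mpoly a g) + Lin m n a g + rg)
       - Const (eval_mpoly a f) * Const (eval_mpoly a g)
       - (Const (eval_mpoly a f) * Lin m n a g + Const (eval_mpoly a g) * Lin m n a f) =
       Const (eval_mpoly a f) * rg + Lin m n a f * Lin m n a g + Lin m n a f * rg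
       + (Const (eval_mpoly a g) + Lin m n a g + rg) * rf"
      by (rule id)
    then show ?thesis by (simp only: fe[symmetric] ge[symmetric] eval_mult Const_mult Lin_mult)
  qed
  moreover have "Const (eval_mpoly a f) * rg \<in> JJ m n a" by (rule JJ_mult[OF rg P_Const])
  moreover have "Lin m n a f * Lin m n a g \<in> JJ m n a" by (rule JJ_QQ[OF Lin_kerQ Lin_kerQ])
  moreover have "Lin m n a f * rg \<in> JJ m n a" by (rule JJ_mult[OF rg Lin_P])
  moreover have "g * rf \<in> JJ m n a" using JJ_mult[OF rf] g by blast
  ultimately show "f * g - Const (eval_mpoly a (f * g)) - Lin m n a (f * g) \<in> JJ m n a"
    by (metis JJ_add)
qed
lemma good_sum: "(\<And>x. x \<in> A \<Longrightarrow> good m n a (g x)) \<Longrightarrow> good m n a (sum g A)"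
  by (induction A rule: infinite_finite_induct) (auto simp: good_add good_Const[of _ _ _ 0, simplified])
lemma good_prod: "(\<And>x. x \<in> A \<Longrightarrow> good m n a (g x)) \<Longrightarrow> good m n a (prod g A)"
  by (induction A rule: infinite_finite_induct) (auto simp: good_mult good_Const[of _ _ _ 1, simplified Const_one])
lemma good_power: "good m n a f \<Longrightarrow> good m n a (f ^ k)"
  by (induction k) (auto simp: good_mult good_Const[of _ _ _ 1, simplified Const_one])

lemma Var_power: "Var i j ^ k = Poly_Mapping.single (Poly_Mapping.single (i, j) k) 1"
  by (induction k) (simp_all add: Var_def mult_single single_add[symmetric] add.commute)

lemma prod_Var_single: "finite A \<Longrightarrow> (\<Prod>v\<in>A. Var (fst v) (snd v) ^ Poly_Mapping.lookup mo v) =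
      Poly_Mapping.single (\<Sum>v\<in>A. Poly_Mapping.single v (Poly_Mapping.lookup mo v)) (1::'a::comm_ring_1)"
proof (induction rule: finite_induct)
  case empty then show ?case by simp
next
  case (insert x F)
  then show ?case by (cases x) (simp add: Var_power mult_single add.commute)
qed

lemma single_monomial:
  "Poly_Mapping.single mo c = Const c * (\<Prod>v\<in>Poly_Mapping.keys mo. Var (fst v) (snd v) ^ Poly_Mapping.lookup mo v)"
proof -
  have "(\<Prod>v\<in>Poly_Mapping.keys mo. Var (fst v) (snd v) ^ Poly_Mapping.lookup mo v) = Poly_Mapping.single mo (1::'a)"
    using mpoly_expand[of mo, symmetric] prod_Var_single[of "Poly_Mapping.keys mo" mo] by simp
  then show ?thesis by (simp add: Const_def mult_single)
qed

lemma P_good: "f \<in> poly_ring m n \<Longrightarrow> good m n a f"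
proof -
  assume fP: "f \<in> poly_ring m n"
  have "good m n a (\<Sum>k\<in>Poly_Mapping.keys f. Poly_Mapping.single k (Poly_Mapping.lookup f k))"
  proof (rule good_sum)
    fix k assume k: "k \<in> Poly_Mapping.keys f"
    then have ks: "Poly_Mapping.keys k \<subseteq> {..<m} \<times> {..<n}" using fP by (auto simp: poly_ring_def)
    show "good m n a (Poly_Mapping.single k (Poly_Mapping.lookup f k))"
      unfolding single_monomial
      by (rule good_mult[OF good_Const good_prod[OF good_power[OF good_Var]]]) (use ks in auto)
  qed
  then show ?thesis using mpoly_expand[of f] by simp
qed

lemma taylor_kernel:
  assumes "f \<in> kerQ m n a" "\<And>v. v \<in> GR m n \<Longrightarrow> dd a v f = 0"
  shows "f \<in> JJ m n a"
proof -
  have "good m n a f" using assms(1) by (auto simp: kerQ_def intro: P_good)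
  moreover have "eval_mpoly a f = 0" using assms(1) by (simp add: kerQ_def)
  moreover have "Lin m n a f = 0" unfolding Lin_def using assms(2) by simp
  ultimately show ?thesis by (simp add: good_def)
qed

lemma JJ_props:
  assumes "x \<in> JJ m n a"
  shows "x \<in> poly_ring m n \<and> eval_mpoly a x = 0 \<and> (\<forall>w. dd a w x = 0)"
  using assms unfolding JJ_def
proof (rule gi_induct)
  show "0 \<in> poly_ring m n \<and> eval_mpoly a 0 = 0 \<and> (\<forall>w. dd a w 0 = 0)" by (simp add: P_zero)
next
  fix u v :: "'a mpoly"
  assume "u \<in> poly_ring m n \<and> eval_mpoly a u = 0 \<and> (\<forall>w. dd a w u = 0)"
     "v \<in> poly_ring m n \<and> eval_mpoly a v = 0 \<and> (\<forall>w. dd a w v = 0)"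
  then show "u + v \<in> poly_ring m n \<and> eval_mpoly a (u + v) = 0 \<and> (\<forall>w. dd a w (u + v) = 0)"
    by (simp add: P_add eval_add dd_add)
next
  fix c s :: "'a mpoly" assume c: "c \<in> poly_ring m n" and s: "s \<in> QQ m n a"
  then obtain f g where "s = f * g" "f \<in> kerQ m n a" "g \<in> kerQ m n a" by (auto simp: QQ_def)
  then show "c * s \<in> poly_ring m n \<and> eval_mpoly a (c * s) = 0 \<and> (\<forall>w. dd a w (c * s) = 0)"
    using c by (auto simp: kerQ_def P_mult eval_mult dd_mult)
qed


lemma perm_less: "p permutes {..<k} \<Longrightarrow> i < k \<Longrightarrow> p i < k"
  using permutes_in_image[of p "{..<k}" i] by simp

lemma strict_mono_on_lessThan_ge:
  fixes f :: "nat \<Rightarrow> nat"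
  assumes "strict_mono_on {..<k} f" "i \<le> j" "j < k"
  shows "f i + (j - i) \<le> f j"
  using assms(2,3)
proof (induction j arbitrary: i)
  case 0 then show ?case by simp
next
  case (Suc j)
  show ?case
  proof (cases "i = Suc j")
    case True then show ?thesis by simp
  next
    case False
    then have "i \<le> j" using Suc by simp
    then have "f i + (j - i) \<le> f j" using Suc by simp
    moreover have "f j < f (Suc j)" using assms(1) Suc by (auto simp: strict_mono_on_def)
    ultimately show ?thesis using \<open>i \<le> j\<close> by simp
  qed
qed

lemma strict_mono_on_id:
  fixes f :: "nat \<Rightarrow> nat"
  assumes "strict_mono_on {..<k} f" "f ` {..<k} \<subseteq> {..<k}" "i < k"
  shows "f i = i"
proof -
  have "f 0 + (i - 0) \<le> f i" using strict_mono_on_lessThan_ge[OF assms(1), of 0 i] assms(3) by simp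
  moreover have "f i + (k - 1 - i) \<le> f (k - 1)" using strict_mono_on_lessThan_ge[OF assms(1), of i "k - 1"] assms(3) by simp
  moreover have "f (k - 1) < k"
  proof -
    have "k - 1 \<in> {..<k}" using assms(3) by simp
    then show ?thesis using assms(2) by blast
  qed
  ultimately show ?thesis using assms(3) by linarith
qed

lemma minor_rs_id:
  assumes "\<And>i. i < k \<Longrightarrow> rs i = i"
  shows "minor k rs cs = minor k (\<lambda>i. i) cs"
  unfolding minor_def using assms by (intro sum.cong refl arg_cong2[where f = "(*)"] prod.cong) auto

lemma dd_of_int_mult: "dd a w (of_int z * g) = of_int z * dd a w g"
  by (simp add: dd_mult)

lemma prod_if_all:
  fixes c :: "'b \<Rightarrow> 'a::comm_semiring_1"
  assumes "finite A"
  shows "(\<Prod>i\<in>A. if P i then c i else 0) = (if \<forall>i\<in>A. P i then (\<Prod>i\<in>A. c i) else 0)"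
  using assms by (induction A rule: finite_induct) auto

locale dsetup =
  fixes uf :: "'a::idom" and m n :: nat and as :: "nat \<Rightarrow> nat"
  assumes dvr: "is_dvr_uniformiser uf" and m2: "2 \<le> m" and mn: "m \<le> n"
begin

abbreviation "t \<equiv> m - 1"
abbreviation "a \<equiv> amat uf m as"
abbreviation "w \<equiv> (\<Sum>i<m - 1. as i)"
abbreviation "\<Delta> \<equiv> uf ^ w"
abbreviation "R \<equiv> n - (m - 1)"

lemma t_pos: "0 < t" using m2 by simp
lemma m_eq: "m = Suc t" using m2 by simp
lemma t_less_n: "t < n" using m2 mn by simp
lemma Suc_t: "Suc t = m" using m2 by simp
lemma less_m_iff: "i < m \<longleftrightarrow> i < t \<or> i = t" using m2 by auto
lemma lessThan_m: "{..<m} = insert t {..<t}" using m2 by auto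

lemma uf_nz: "uf \<noteq> 0" using dvr by (simp add: is_dvr_uniformiser_def)
lemma Delta_nz: "\<Delta> \<noteq> 0" using uf_nz by simp

lemma a_last [simp]: "a t j = 0" "amat uf m as (m - Suc 0) j = 0"
  by (simp_all add: amat_def)

lemma prod_a: "(\<Prod>i<t. a i (c i)) = (if \<forall>i<t. c i mod t = i then \<Delta> else 0)"
proof -
  have "(\<Prod>i<t. a i (c i)) = (\<Prod>i<t. if c i mod t = i then uf ^ as i else 0)"
    by (rule prod.cong) (auto simp: amat_def)
  also have "\<dots> = (if \<forall>i<t. c i mod t = i then (\<Prod>i<t. uf ^ as i) else 0)"
    by (subst prod_if_all) auto
  also have "(\<Prod>i<t. uf ^ as i) = \<Delta>" by (simp add: power_sum)
  finally show ?thesis .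
qed

definition inK :: "(nat \<Rightarrow> 'a) \<Rightarrow> bool" where
  "inK u \<longleftrightarrow> (\<forall>r<t. (\<Sum>j\<in>{j. j < n \<and> j mod t = r}. u j) = 0)"

lemma finite_Sr [simp]: "finite {j. j < n \<and> j mod t = r}" by simp

lemma inK_sum: "(\<And>x. x \<in> A \<Longrightarrow> inK (f x)) \<Longrightarrow> inK (\<lambda>j. \<Sum>x\<in>A. f x j)"
  unfolding inK_def by (subst sum.swap) simp
lemma inK_scale: "inK u \<Longrightarrow> inK (\<lambda>j. c * u j)"
  unfolding inK_def by (simp add: sum_distrib_left[symmetric])
lemma inK_add: "inK u \<Longrightarrow> inK v \<Longrightarrow> inK (\<lambda>j. u j + v j)"
  unfolding inK_def by (simp add: sum.distrib)
lemma inK_diff: "inK u \<Longrightarrow> inK v \<Longrightarrow> inK (\<lambda>j. u j - v j)"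
  unfolding inK_def by (simp add: sum_subtractf)
lemma inK_zero: "inK (\<lambda>j. 0)"
  unfolding inK_def by simp

lemma inK_low:
  assumes "inK u" "r < t"
  shows "u r = - (\<Sum>j\<in>{j. t \<le> j \<and> j < n \<and> j mod t = r}. u j)"
proof -
  have eq: "{j. j < n \<and> j mod t = r} = insert r {j. t \<le> j \<and> j < n \<and> j mod t = r}"
  proof (rule Set.set_eqI, rule iffI)
    fix j assume j: "j \<in> {j. j < n \<and> j mod t = r}"
    show "j \<in> insert r {j. t \<le> j \<and> j < n \<and> j mod t = r}"
    proof (cases "t \<le> j")
      case False then have "j mod t = j" by simp
      then show ?thesis using j by auto
    qed (use j in auto)
  next
    fix j assume "j \<in> insert r {j. t \<le> j \<and> j < n \<and> j mod t = r}"
    then have "j = r \<or> (t \<le> j \<and> j < n \<and> j mod t = r)" by simp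
    moreover have "r < n" using \<open>r < t\<close> t_less_n by linarith
    moreover have "r mod t = r" using \<open>r < t\<close> by (rule mod_less)
    ultimately show "j \<in> {j. j < n \<and> j mod t = r}" by auto
  qed
  have "0 = (\<Sum>j\<in>{j. j < n \<and> j mod t = r}. u j)" using assms by (simp add: inK_def)
  also have "\<dots> = u r + (\<Sum>j\<in>{j. t \<le> j \<and> j < n \<and> j mod t = r}. u j)"
    unfolding eq by (subst sum.insert) (use assms(2) in auto)
  finally show ?thesis by (simp add: eq_neg_iff_add_eq_0)
qed

lemma inK_zero_high:
  assumes "inK u" "\<And>j. t \<le> j \<Longrightarrow> j < n \<Longrightarrow> u j = 0" "j < n"
  shows "u j = 0"
proof (cases "t \<le> j")
  case True then show ?thesis using assms by simp
next
  case False
  then show ?thesis using inK_low[OF assms(1), of j] assms(2) by simp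
qed

lemma inK_elem:
  assumes "t \<le> j" "j < n"
  shows "inK (\<lambda>j'. c * ((if j' = j then 1 else 0) - (if j' = j mod t then 1 else 0)))"
proof -
  have "inK (\<lambda>j'. (if j' = j then 1 else 0) - (if j' = j mod t then 1 else 0))"
    unfolding inK_def
  proof (intro allI impI)
    fix r assume r: "r < t"
    show "(\<Sum>j'\<in>{j'. j' < n \<and> j' mod t = r}. (if j' = j then 1 else 0) - (if j' = j mod t then (1::'a) else 0)) = 0"
      using r assms t_pos by (simp add: sum_subtractf sum.delta)
  qed
  then show ?thesis by (rule inK_scale)
qed

end


lemma det_rows_eq_zero:
  fixes C :: "nat \<Rightarrow> nat \<Rightarrow> 'a::comm_ring_1"
  assumes "r < k" "s < k" "r \<noteq> s" "\<And>j. C r j = C s j"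
  shows "(\<Sum>p\<in>{p. p permutes {..<k}}. of_int (sign p) * (\<Prod>i<k. C i (p i))) = 0"
proof -
  define A where "A = mat k k (\<lambda>(i, j). C i j)"
  have Ac: "A \<in> carrier_mat k k" by (simp add: A_def)
  have "row A r = row A s" using assms by (simp add: A_def)
  then have "det A = 0" by (rule det_identical_rows[OF Ac assms(3,1,2)])
  moreover have "det A = (\<Sum>p\<in>{p. p permutes {..<k}}. of_int (sign p) * (\<Prod>i<k. C i (p i)))"
  proof -
    have "det A = (\<Sum>p\<in>{p. p permutes {0..<k}}. of_int (sign p) * (\<Prod>i = 0..<k. A $$ (i, p i)))"
      by (rule det_def'[OF Ac])
    also have "\<dots> = (\<Sum>p\<in>{p. p permutes {..<k}}. of_int (sign p) * (\<Prod>i<k. C i (p i)))"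
    proof (rule sum.cong)
      show "{p. p permutes {0..<k}} = {p. p permutes {..<k}}" by (simp add: atLeast0LessThan)
    next
      fix p assume "p \<in> {p. p permutes {..<k}}"
      then have p: "p permutes {..<k}" by simp
      have "(\<Prod>i = 0..<k. A $$ (i, p i)) = (\<Prod>i<k. C i (p i))"
        unfolding atLeast0LessThan
        by (rule prod.cong) (auto simp: A_def perm_less[OF p])
      then show "of_int (sign p) * (\<Prod>i = 0..<k. A $$ (i, p i)) = of_int (sign p) * (\<Prod>i<k. C i (p i))"
        by simp
    qed
    finally show ?thesis .
  qed
  ultimately show ?thesis by simp
qed

context dsetup
begin

definition uM :: "(nat \<Rightarrow> nat) \<Rightarrow> nat \<Rightarrow> 'a" where
  "uM cs j = (\<Sum>p\<in>{p. p permutes {..<m}}. of_int (sign p) *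
      (if (\<forall>l<t. cs (p l) mod t = l) \<and> cs (p t) = j then 1 else 0))"

abbreviation "MM cs \<equiv> (minor m (\<lambda>i. i) cs :: 'a mpoly)"

lemma prod_lessThan_m: "(\<Prod>i<m. f i) = (\<Prod>i<t. f i) * f t"
  unfolding lessThan_m by (simp add: mult.commute)

lemma dd_prod_Var:
  "dd a v (\<Prod>i<m. Var i (c i)) = (if \<forall>i<t. c i mod t = i then \<Delta> else 0) * (if v = (t, c t) then 1 else 0)"
proof -
  have "dd a v (\<Prod>i<m. Var i (c i)) = dd a v ((\<Prod>i<t. Var i (c i)) * Var t (c t))"
    by (simp only: prod_lessThan_m)
  also have "\<dots> = eval_mpoly a (\<Prod>i<t. Var i (c i)) * dd a v (Var t (c t))
      + eval_mpoly a (Var t (c t)) * dd a v (\<Prod>i<t. Var i (c i))"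
    by (rule dd_mult)
  also have "eval_mpoly a (Var t (c t)) = 0" by simp
  also have "eval_mpoly a (\<Prod>i<t. Var i (c i)) = (\<Prod>i<t. a i (c i))" by (simp add: eval_prod)
  also have "dd a v (Var t (c t)) = (if v = (t, c t) then 1 else 0)" by (auto simp: dd_Var)
  finally show ?thesis by (simp only: prod_a mult_zero_left add_0_right)
qed

lemma eval_minor: "eval_mpoly a (MM cs) = 0"
  unfolding minor_def
  by (simp add: eval_sum eval_mult eval_prod prod_lessThan_m)

lemma dd_minor: "dd a (i, j) (MM cs) = (if i = t then \<Delta> * uM cs j else 0)"
proof -
  have "dd a (i, j) (MM cs) = (\<Sum>p\<in>{p. p permutes {..<m}}. of_int (sign p) *
      ((if \<forall>l<t. cs (p l) mod t = l then \<Delta> else 0) * (if (i, j) = (t, cs (p t)) then 1 else 0)))"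
    unfolding minor_def by (simp add: dd_sum dd_of_int_mult dd_prod_Var)
  also have "\<dots> = (if i = t then \<Delta> * uM cs j else 0)"
    unfolding uM_def by (cases "i = t") (auto simp: sum_distrib_left intro!: sum.cong)
  finally show ?thesis .
qed

lemma minor_P:
  assumes "cs ` {..<m} \<subseteq> {..<n}"
  shows "MM cs \<in> poly_ring m n"
  unfolding minor_def
proof (intro P_sum P_mult P_of_int P_prod P_Var)
  fix p i assume "p \<in> {p. p permutes {..<m}}" "i \<in> {..<m}"
  then have "p i \<in> {..<m}" by (simp add: perm_less)
  then show "cs (p i) < n" using assms by auto
qed auto

lemma uM_inK:
  assumes cs: "cs ` {..<m} \<subseteq> {..<n}"
  shows "inK (uM cs)"
  unfolding inK_def
proof (intro allI impI)
  fix r assume r: "r < t"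
  define S where "S = {j. j < n \<and> j mod t = r}"
  define C where "C i k = (if cs k mod t = (if i < t then i else r) then 1 else (0::'a))" for i k
  have "(\<Sum>j\<in>S. uM cs j) = (\<Sum>p\<in>{p. p permutes {..<m}}. of_int (sign p) *
      (\<Sum>j\<in>S. if (\<forall>l<t. cs (p l) mod t = l) then (if j = cs (p t) then 1 else 0) else 0))"
    unfolding uM_def by (subst sum.swap) (auto simp: sum_distrib_left intro!: sum.cong)
  also have "\<dots> = (\<Sum>p\<in>{p. p permutes {..<m}}. of_int (sign p) * (\<Prod>i<m. C i (p i)))"
  proof (rule sum.cong[OF refl])
    fix p assume "p \<in> {p. p permutes {..<m}}"
    then have "p t \<in> {..<m}" using m2 by (simp add: perm_less)
    then have ptn: "cs (p t) < n" using cs by auto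
    have "(\<Prod>i<m. C i (p i)) = (\<Prod>i<t. C i (p i)) * C t (p t)" by (rule prod_lessThan_m)
    also have "(\<Prod>i<t. C i (p i)) = (\<Prod>i<t. if cs (p i) mod t = i then 1 else 0)"
      by (rule prod.cong) (auto simp: C_def)
    also have "\<dots> = (if \<forall>i<t. cs (p i) mod t = i then 1 else 0)"
      by (subst prod_if_all) auto
    finally have "(\<Prod>i<m. C i (p i)) = (if (\<forall>l<t. cs (p l) mod t = l) \<and> cs (p t) mod t = r then 1 else 0)"
      by (simp add: C_def)
    moreover have "(\<Sum>j\<in>S. if (\<forall>l<t. cs (p l) mod t = l) then (if j = cs (p t) then 1 else 0) else (0::'a)) =
       (if (\<forall>l<t. cs (p l) mod t = l) \<and> cs (p t) mod t = r then 1 else 0)"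
    proof (cases "\<forall>l<t. cs (p l) mod t = l")
      case True
      then show ?thesis using ptn by (simp add: S_def sum.delta)
    next
      case False
      then show ?thesis by (simp only: if_False S_def sum.neutral_const) simp
    qed
    ultimately show "of_int (sign p) * (\<Sum>j\<in>S. if (\<forall>l<t. cs (p l) mod t = l) then (if j = cs (p t) then 1 else 0) else 0) =
        of_int (sign p) * (\<Prod>i<m. C i (p i))" by simp
  qed
  also have "\<dots> = 0"
    by (rule det_rows_eq_zero[of r m t]) (use r m2 in \<open>auto simp: C_def\<close>)
  finally show "(\<Sum>j\<in>{j. j < n \<and> j mod t = r}. uM cs j) = 0" by (simp add: S_def)
qed

definition csj :: "nat \<Rightarrow> nat \<Rightarrow> nat" where
  "csj j k = (if k < t then k else j)"

lemma csj_minors: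
  assumes "t \<le> j" "j < n"
  shows "MM (csj j) \<in> minors m n m"
  unfolding minors_def
proof (intro CollectI exI conjI)
  show "MM (csj j) = minor m (\<lambda>i. i) (csj j)" by simp
  show "strict_mono_on {..<m} (\<lambda>i. i)" by (simp add: strict_mono_on_def)
  show "(\<lambda>i. i) ` {..<m} \<subseteq> {..<m}" by auto
  show "strict_mono_on {..<m} (csj j)"
    using assms by (auto simp: strict_mono_on_def csj_def)
  show "csj j ` {..<m} \<subseteq> {..<n}"
    using assms t_less_n by (auto simp: csj_def)
qed

lemma csj_img: "t \<le> j \<Longrightarrow> j < n \<Longrightarrow> csj j ` {..<m} \<subseteq> {..<n}"
  using t_less_n by (auto simp: csj_def)

lemma uM_csj_high:
  assumes "t \<le> j" "j < n" "t \<le> j'"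
  shows "uM (csj j) j' = (if j' = j then 1 else 0)"
proof (cases "j' = j")
  case False
  have "\<And>p. csj j (p t) \<noteq> j'" using False assms by (auto simp: csj_def)
  then show ?thesis using False by (simp add: uM_def)
next
  case True
  have cond: "((\<forall>l<t. csj j (p l) mod t = l) \<and> csj j (p t) = j) \<longleftrightarrow> p = id"
    if p: "p permutes {..<m}" for p
  proof
    assume H: "(\<forall>l<t. csj j (p l) mod t = l) \<and> csj j (p t) = j"
    have pt: "p t = t"
    proof (rule ccontr)
      assume "p t \<noteq> t"
      moreover have "p t < m" using p m2 by (simp add: perm_less)
      ultimately have "p t < t" using less_m_iff by blast
      then have "csj j (p t) < t" by (simp add: csj_def)
      then show False using H assms by simp
    qed
    have "\<forall>l<m. p l = l"
    proof (intro allI impI)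
      fix l assume l: "l < m"
      show "p l = l"
      proof (cases "l = t")
        case True then show ?thesis using pt by simp
      next
        case False
        then have lt: "l < t" using l less_m_iff by blast
        have "p l \<noteq> t" using pt False permutes_inj[OF p] by (metis injD)
        moreover have "p l < m" using p l by (simp add: perm_less)
        ultimately have "p l < t" using less_m_iff by blast
        then have "csj j (p l) mod t = p l" by (simp add: csj_def)
        then show ?thesis using H lt by simp
      qed
    qed
    then show "p = id"
      using p by (metis id_apply lessThan_iff permutes_def ext)
  next
    assume "p = id"
    then show "(\<forall>l<t. csj j (p l) mod t = l) \<and> csj j (p t) = j" by (simp add: csj_def)
  qed
  have "uM (csj j) j' = (\<Sum>p\<in>{p. p permutes {..<m}}. if p = id then 1 else 0)"
    unfolding uM_def True
    by (rule sum.cong[OF refl]) (use cond in auto)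
  also have "\<dots> = 1"
    by (simp add: sum.delta permutes_id finite_permutations)
  finally show ?thesis using True by simp
qed

end


context dsetup
begin

abbreviation "QS \<equiv> kerQ m n a"
abbreviation "NS \<equiv> denomN m n a"
abbreviation "TS \<equiv> torsT m n a"
abbreviation "PS \<equiv> poly_ring m n :: 'a mpoly set"

lemma minors_MM:
  assumes "s \<in> minors m n m"
  obtains cs where "s = MM cs" "cs ` {..<m} \<subseteq> {..<n}"
proof -
  obtain rs cs where s: "s = minor m rs cs" "strict_mono_on {..<m} rs" "rs ` {..<m} \<subseteq> {..<m}"
    "cs ` {..<m} \<subseteq> {..<n}"
    using assms unfolding minors_def by blast
  have "\<And>i. i < m \<Longrightarrow> rs i = i" using strict_mono_on_id[OF s(2,3)] by blast
  then have "s = MM cs" using s(1) minor_rs_id by metis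
  then show ?thesis using that s(4) by blast
qed

lemma Q_intro: "x \<in> PS \<Longrightarrow> eval_mpoly a x = 0 \<Longrightarrow> x \<in> QS"
  by (simp add: kerQ_def)
lemma Q_P: "x \<in> QS \<Longrightarrow> x \<in> PS"
  by (simp add: kerQ_def)
lemma Q_eval: "x \<in> QS \<Longrightarrow> eval_mpoly a x = 0"
  by (simp add: kerQ_def)
lemma Q_add: "x \<in> QS \<Longrightarrow> y \<in> QS \<Longrightarrow> x + y \<in> QS"
  by (simp add: kerQ_def P_add eval_add)
lemma Q_diff: "x \<in> QS \<Longrightarrow> y \<in> QS \<Longrightarrow> x - y \<in> QS"
  by (simp add: kerQ_def P_diff eval_diff)
lemma Q_Const_mult: "x \<in> QS \<Longrightarrow> Const c * x \<in> QS"
  by (simp add: kerQ_def P_mult P_Const eval_mult)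

lemma NS_alt: "NS = gen_ideal PS (QQ m n a \<union> minors m n m)"
  by (simp add: denomN_def QQ_def)

lemma N_add: "x \<in> NS \<Longrightarrow> y \<in> NS \<Longrightarrow> x + y \<in> NS"
  unfolding NS_alt by (rule giP_add)
lemma N_diff: "x \<in> NS \<Longrightarrow> y \<in> NS \<Longrightarrow> x - y \<in> NS"
  unfolding NS_alt by (rule giP_diff)
lemma N_mult: "x \<in> NS \<Longrightarrow> r \<in> PS \<Longrightarrow> r * x \<in> NS"
  unfolding NS_alt by (rule giP_mult)
lemma N_Const_mult: "x \<in> NS \<Longrightarrow> Const c * x \<in> NS"
  by (rule N_mult[OF _ P_Const])
lemma N_sum: "(\<And>x. x \<in> A \<Longrightarrow> g x \<in> NS) \<Longrightarrow> sum g A \<in> NS"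
  unfolding NS_alt by (rule giP_sum)
lemma JJ_N: "x \<in> JJ m n a \<Longrightarrow> x \<in> NS"
  unfolding NS_alt JJ_def using gi_mono[of "QQ m n a" "QQ m n a \<union> minors m n m" PS] by blast
lemma minor_N: "s \<in> minors m n m \<Longrightarrow> s \<in> NS"
proof -
  assume s: "s \<in> minors m n m"
  have "(1::'a mpoly) \<in> PS" by (rule P_one)
  from gi_gen[of s "QQ m n a \<union> minors m n m" 1 PS, OF _ this] s show "s \<in> NS"
    unfolding NS_alt by simp
qed

lemma N_props:
  assumes "x \<in> NS"
  shows "x \<in> PS \<and> eval_mpoly a x = 0 \<and> (\<forall>i j. i \<noteq> t \<longrightarrow> dd a (i, j) x = 0) \<and>
    (\<exists>u. inK u \<and> (\<forall>j. dd a (t, j) x = \<Delta> * u j))"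
  using assms unfolding NS_alt
proof (rule gi_induct)
  show "0 \<in> PS \<and> eval_mpoly a 0 = 0 \<and> (\<forall>i j. i \<noteq> t \<longrightarrow> dd a (i, j) 0 = 0) \<and>
    (\<exists>u. inK u \<and> (\<forall>j. dd a (t, j) 0 = \<Delta> * u j))"
    using inK_zero by (auto simp: P_zero)
next
  fix x y :: "'a mpoly"
  assume x: "x \<in> PS \<and> eval_mpoly a x = 0 \<and> (\<forall>i j. i \<noteq> t \<longrightarrow> dd a (i, j) x = 0) \<and>
    (\<exists>u. inK u \<and> (\<forall>j. dd a (t, j) x = \<Delta> * u j))"
   and y: "y \<in> PS \<and> eval_mpoly a y = 0 \<and> (\<forall>i j. i \<noteq> t \<longrightarrow> dd a (i, j) y = 0) \<and>
    (\<exists>u. inK u \<and> (\<forall>j. dd a (t, j) y = \<Delta> * u j))"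
  then obtain u v where u: "inK u" "\<forall>j. dd a (t, j) x = \<Delta> * u j"
    and v: "inK v" "\<forall>j. dd a (t, j) y = \<Delta> * v j" by blast
  have "inK (\<lambda>j. u j + v j)" using inK_add[OF u(1) v(1)] .
  moreover have "\<forall>j. dd a (t, j) (x + y) = \<Delta> * (u j + v j)"
    using u v by (simp add: dd_add distrib_left)
  ultimately show "x + y \<in> PS \<and> eval_mpoly a (x + y) = 0 \<and> (\<forall>i j. i \<noteq> t \<longrightarrow> dd a (i, j) (x + y) = 0) \<and>
    (\<exists>u. inK u \<and> (\<forall>j. dd a (t, j) (x + y) = \<Delta> * u j))"
    using x y by (auto simp: P_add eval_add dd_add)
next
  fix c s :: "'a mpoly"
  assume c: "c \<in> PS" and s: "s \<in> QQ m n a \<union> minors m n m"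
  show "c * s \<in> PS \<and> eval_mpoly a (c * s) = 0 \<and> (\<forall>i j. i \<noteq> t \<longrightarrow> dd a (i, j) (c * s) = 0) \<and>
    (\<exists>u. inK u \<and> (\<forall>j. dd a (t, j) (c * s) = \<Delta> * u j))"
  proof (cases "s \<in> QQ m n a")
    case True
    then obtain f g where fg: "s = f * g" "f \<in> QS" "g \<in> QS" by (auto simp: QQ_def)
    then have "s \<in> PS" "eval_mpoly a s = 0" "\<And>v. dd a v s = 0"
      by (auto simp: kerQ_def P_mult eval_mult dd_mult)
    then show ?thesis using c inK_zero by (auto simp: P_mult eval_mult dd_mult)
  next
    case False
    then have "s \<in> minors m n m" using s by simp
    then obtain cs where cs: "s = MM cs" "cs ` {..<m} \<subseteq> {..<n}" by (rule minors_MM)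
    have "inK (\<lambda>j. eval_mpoly a c * uM cs j)" by (rule inK_scale[OF uM_inK[OF cs(2)]])
    moreover have "\<forall>j. dd a (t, j) (c * s) = \<Delta> * (eval_mpoly a c * uM cs j)"
      using cs by (simp add: dd_mult eval_minor dd_minor)
    ultimately show ?thesis using cs c
      by (auto simp: P_mult eval_mult dd_mult eval_minor dd_minor minor_P)
  qed
qed

lemma N_Q: "x \<in> NS \<Longrightarrow> x \<in> QS"
  using N_props by (simp add: kerQ_def)

definition zz :: "(nat \<Rightarrow> 'a) \<Rightarrow> 'a mpoly" where
  "zz u = (\<Sum>j\<in>{t..<n}. Const (u j) * MM (csj j))"

lemma zz_N: "zz u \<in> NS"
  unfolding zz_def by (intro N_sum N_Const_mult minor_N csj_minors) auto

lemma dd_zz: "dd a (i, j') (zz u) = (if i = t then \<Delta> * (\<Sum>j\<in>{t..<n}. u j * uM (csj j) j') else 0)"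
  unfolding zz_def by (simp add: dd_sum dd_Const_mult dd_minor sum_distrib_left mult.left_commute)

lemma zz_coeff:
  assumes u: "inK u" and j': "j' < n"
  shows "(\<Sum>j\<in>{t..<n}. u j * uM (csj j) j') = u j'"
proof -
  define v where "v j' = (\<Sum>j\<in>{t..<n}. u j * uM (csj j) j')" for j'
  have vK: "inK v" unfolding v_def
    by (intro inK_sum inK_scale uM_inK csj_img) auto
  have high: "v j'' = u j''" if "t \<le> j''" "j'' < n" for j''
  proof -
    have "v j'' = (\<Sum>j\<in>{t..<n}. if j'' = j then u j else 0)"
      unfolding v_def by (rule sum.cong) (use that in \<open>auto simp: uM_csj_high\<close>)
    also have "\<dots> = u j''" using that by (simp add: sum.delta)
    finally show ?thesis .
  qed
  have "u j' - v j' = 0"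
    by (rule inK_zero_high[OF inK_diff[OF u vK] _ j']) (simp add: high)
  then show ?thesis by (simp add: v_def)
qed

lemma N_intro:
  assumes x: "x \<in> QS" and low: "\<And>i j. i < t \<Longrightarrow> j < n \<Longrightarrow> dd a (i, j) x = 0"
    and u: "inK u" and top: "\<And>j. j < n \<Longrightarrow> dd a (t, j) x = \<Delta> * u j"
  shows "x \<in> NS"
proof -
  have zQ: "zz u \<in> QS" by (rule N_Q[OF zz_N])
  have "x - zz u \<in> JJ m n a"
  proof (rule taylor_kernel)
    show "x - zz u \<in> QS" by (rule Q_diff[OF x zQ])
  next
    fix v assume v: "v \<in> GR m n"
    then obtain i j where ij: "v = (i, j)" "i < m" "j < n" by (auto simp: GR_def)
    show "dd a v (x - zz u) = 0"
    proof (cases "i = t")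
      case True
      then show ?thesis using ij top[of j] zz_coeff[OF u, of j] by (simp add: dd_diff dd_zz)
    next
      case False
      then have "i < t" using ij less_m_iff by blast
      then show ?thesis using ij low by (simp add: dd_diff dd_zz)
    qed
  qed
  then have "x - zz u \<in> NS" by (rule JJ_N)
  then have "(x - zz u) + zz u \<in> NS" by (rule N_add[OF _ zz_N])
  then show ?thesis by simp
qed

lemma inK_cancel:
  assumes "c \<noteq> 0" "inK (\<lambda>j. c * f j)"
  shows "inK f"
  using assms unfolding inK_def by (simp add: sum_distrib_left[symmetric])

lemma T_char:
  "x \<in> TS \<longleftrightarrow> x \<in> QS \<and> (\<forall>i<t. \<forall>j<n. dd a (i, j) x = 0) \<and> inK (\<lambda>j. dd a (t, j) x)"
proof
  assume "x \<in> TS"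
  then obtain c where x: "x \<in> QS" "c \<noteq> 0" "Const c * x \<in> NS" by (auto simp: torsT_def)
  from N_props[OF x(3)] obtain u where
    lo: "\<forall>i j. i \<noteq> t \<longrightarrow> c * dd a (i, j) x = 0" and
    u: "inK u" "\<forall>j. c * dd a (t, j) x = \<Delta> * u j"
    by (auto simp: dd_Const_mult)
  have "\<forall>i<t. \<forall>j<n. dd a (i, j) x = 0" using lo x(2) by auto
  moreover have "inK (\<lambda>j. c * dd a (t, j) x)" using inK_scale[OF u(1), of \<Delta>] u(2) by simp
  then have "inK (\<lambda>j. dd a (t, j) x)" by (rule inK_cancel[OF x(2)])
  ultimately show "x \<in> QS \<and> (\<forall>i<t. \<forall>j<n. dd a (i, j) x = 0) \<and> inK (\<lambda>j. dd a (t, j) x)"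
    using x(1) by blast
next
  assume H: "x \<in> QS \<and> (\<forall>i<t. \<forall>j<n. dd a (i, j) x = 0) \<and> inK (\<lambda>j. dd a (t, j) x)"
  have "Const \<Delta> * x \<in> NS"
    by (rule N_intro[of _ "\<lambda>j. dd a (t, j) x"]) (use H Q_Const_mult in \<open>auto simp: dd_Const_mult\<close>)
  then show "x \<in> TS" unfolding torsT_def using H Delta_nz by (intro CollectI conjI exI[of _ \<Delta>]) auto
qed

definition xv :: "(nat \<Rightarrow> 'a) \<Rightarrow> 'a mpoly" where
  "xv u = (\<Sum>j<n. Const (u j) * Var t j)"

lemma dd_xv: "j' < n \<Longrightarrow> dd a (i, j') (xv u) = (if i = t then u j' else 0)"
  unfolding xv_def by (simp add: dd_sum dd_Const_mult dd_Var if_distrib[of "\<lambda>x. _ * x"] sum.delta cong: if_cong)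

lemma xv_Q: "xv u \<in> QS"
proof (rule Q_intro)
  show "xv u \<in> PS" unfolding xv_def using m2 by (intro P_sum P_mult P_Const P_Var) auto
  show "eval_mpoly a (xv u) = 0" unfolding xv_def by (simp add: eval_sum eval_mult)
qed

lemma xv_T: "inK u \<Longrightarrow> xv u \<in> TS"
proof -
  assume u: "inK u"
  have "inK (\<lambda>j. dd a (t, j) (xv u))"
  proof -
    have "inK (\<lambda>j. dd a (t, j) (xv u)) = inK u"
      unfolding inK_def by (intro arg_cong[where f = All] ext imp_cong refl sum.cong) (auto simp: dd_xv)
    then show ?thesis using u by simp
  qed
  then show ?thesis unfolding T_char using xv_Q by (auto simp: dd_xv)
qed

lemma T_Q: "x \<in> TS \<Longrightarrow> x \<in> QS"
  by (simp add: T_char)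
lemma N_T: "x \<in> NS \<Longrightarrow> x \<in> TS"
  using N_Q by (auto simp: torsT_def intro!: exI[of _ 1] simp: Const_one)
lemma T_add: "x \<in> TS \<Longrightarrow> y \<in> TS \<Longrightarrow> x + y \<in> TS"
  unfolding T_char by (auto simp: Q_add dd_add intro: inK_add)
lemma T_Const_mult: "x \<in> TS \<Longrightarrow> Const c * x \<in> TS"
  unfolding T_char by (auto simp: Q_Const_mult dd_Const_mult intro: inK_scale)
lemma T_diff: "x \<in> TS \<Longrightarrow> y \<in> TS \<Longrightarrow> x - y \<in> TS"
  unfolding T_char by (auto simp: Q_diff dd_diff intro: inK_diff)

lemma T_to_N:
  assumes "x \<in> TS" "inK u" "\<And>j. j < n \<Longrightarrow> dd a (t, j) x = \<Delta> * u j"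
  shows "x \<in> NS"
  using assms N_intro T_char by blast

lemma N_div:
  assumes "x \<in> NS"
  shows "\<Delta> dvd dd a (t, j) x"
  using N_props[OF assms] by auto

end


context dsetup
begin

lemma dvr_decomp:
  assumes "c \<noteq> 0"
  obtains u u' e where "c = u * uf ^ e" "u' * u = 1"
proof -
  obtain u e where "u dvd 1" "c = u * uf ^ e"
    using dvr assms unfolding is_dvr_uniformiser_def by blast
  moreover obtain u' where "1 = u * u'" using \<open>u dvd 1\<close> by (auto simp: dvd_def)
  ultimately show ?thesis using that by (metis mult.commute)
qed

lemma uf_pow_not_dvd: "\<not> uf ^ Suc k dvd uf ^ k"
proof
  assume "uf ^ Suc k dvd uf ^ k"
  then obtain c where "uf ^ k = uf ^ Suc k * c" by (auto simp: dvd_def)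
  then have "uf ^ k * 1 = uf ^ k * (uf * c)" by (simp add: mult.assoc)
  then have "uf * c = 1" using uf_nz by (metis mult_left_cancel power_not_zero)
  then have "uf dvd 1" by (metis dvd_triv_left)
  then show False using dvr by (simp add: is_dvr_uniformiser_def)
qed

lemma between_diff:
  assumes "between_submod NS TS L" "x \<in> L" "y \<in> L"
  shows "x - y \<in> L"
proof -
  have "Const (- 1) * y \<in> L" using assms by (simp add: between_submod_def)
  then have "- y \<in> L" by (simp add: Const_uminus Const_one)
  then have "x + - y \<in> L" using assms unfolding between_submod_def by blast
  then show ?thesis by (metis diff_conv_add_uminus)
qed

section \<open>Upper bound\<close>

definition Sset :: "'a mpoly set \<Rightarrow> nat \<Rightarrow> nat set" where
  "Sset L k = {e. e < w \<and> (\<exists>x\<in>L. dd a (t, t + k) x = uf ^ e \<and>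
      (\<forall>k'. k < k' \<longrightarrow> k' < R \<longrightarrow> dd a (t, t + k') x = 0))}"

definition phi :: "'a mpoly set \<Rightarrow> nat" where
  "phi L = (\<Sum>k<R. card (Sset L k))"

lemma Sset_sub: "Sset L k \<subseteq> {..<w}"
  by (auto simp: Sset_def)
lemma Sset_fin: "finite (Sset L k)"
  using finite_subset[OF Sset_sub] by simp
lemma Sset_mono: "L \<subseteq> L' \<Longrightarrow> Sset L k \<subseteq> Sset L' k"
  unfolding Sset_def by blast

lemma phi_le: "phi L \<le> R * w"
proof -
  have "phi L \<le> (\<Sum>k<R. w)" unfolding phi_def
    by (rule sum_mono) (metis card_lessThan card_mono finite_lessThan Sset_sub)
  then show ?thesis by simp
qed

lemma T_zero_high_N:
  assumes "x \<in> TS" "\<And>k. k < R \<Longrightarrow> dd a (t, t + k) x = 0"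
  shows "x \<in> NS"
proof (rule T_to_N[OF assms(1) inK_zero])
  fix j assume j: "j < n"
  have K: "inK (\<lambda>j. dd a (t, j) x)" using assms(1) by (simp add: T_char)
  have "dd a (t, j) x = 0"
  proof (rule inK_zero_high[OF K _ j])
    fix j' assume "t \<le> j'" "j' < n"
    then show "dd a (t, j') x = 0" using assms(2)[of "j' - t"] by simp
  qed
  then show "dd a (t, j) x = \<Delta> * 0" by simp
qed

lemma phi_strict:
  assumes L: "between_submod NS TS L" and L': "between_submod NS TS L'" and LL: "L \<subset> L'"
  shows "phi L < phi L'"
proof (rule ccontr)
  assume nlt: "\<not> phi L < phi L'"
  have sub: "L \<subseteq> L'" using LL by blast
  have eqS: "Sset L k = Sset L' k" if k: "k < R" for k
  proof (rule ccontr)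
    assume "Sset L k \<noteq> Sset L' k"
    then have "Sset L k \<subset> Sset L' k" using Sset_mono[OF sub] by blast
    then have "card (Sset L k) < card (Sset L' k)" by (rule psubset_card_mono[OF Sset_fin])
    moreover have "\<forall>k\<in>{..<R}. card (Sset L k) \<le> card (Sset L' k)"
      using Sset_mono[OF sub] by (simp add: card_mono Sset_fin)
    ultimately have "phi L < phi L'" unfolding phi_def using k
      by (intro sum_strict_mono_ex1) auto
    then show False using nlt by simp
  qed
  have NL: "NS \<subseteq> L" and LT: "L' \<subseteq> TS" and NL': "NS \<subseteq> L'"
    using L L' by (auto simp: between_submod_def)
  have L_add: "x + y \<in> L" if "x \<in> L" "y \<in> L" for x y using L that by (simp add: between_submod_def)
  have L_cm: "Const c * x \<in> L" if "x \<in> L" for c x using L that by (simp add: between_submod_def)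
  have L'_cm: "Const c * x \<in> L'" if "x \<in> L'" for c x using L' that by (simp add: between_submod_def)
  have claim: "\<forall>x\<in>L'. (\<forall>k'. s \<le> k' \<longrightarrow> k' < R \<longrightarrow> dd a (t, t + k') x = 0) \<longrightarrow> x \<in> L"
    if "s \<le> R" for s
    using that
  proof (induction s)
    case 0
    show ?case
    proof (intro ballI impI)
      fix x assume x: "x \<in> L'" and z: "\<forall>k'. 0 \<le> k' \<longrightarrow> k' < R \<longrightarrow> dd a (t, t + k') x = 0"
      have "x \<in> NS" by (rule T_zero_high_N) (use x LT z in auto)
      then show "x \<in> L" using NL by blast
    qed
  next
    case (Suc s)
    then have sR: "s < R" by simp
    have IH: "\<forall>x\<in>L'. (\<forall>k'. s \<le> k' \<longrightarrow> k' < R \<longrightarrow> dd a (t, t + k') x = 0) \<longrightarrow> x \<in> L"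
      using Suc by simp
    show ?case
    proof (intro ballI impI)
      fix x assume x: "x \<in> L'" and z: "\<forall>k'. Suc s \<le> k' \<longrightarrow> k' < R \<longrightarrow> dd a (t, t + k') x = 0"
      define c where "c = dd a (t, t + s) x"
      show "x \<in> L"
      proof (cases "c = 0")
        case True
        have "\<forall>k'. s \<le> k' \<longrightarrow> k' < R \<longrightarrow> dd a (t, t + k') x = 0"
          using z True c_def by (metis Suc_leI le_neq_implies_less)
        then show ?thesis using IH x by blast
      next
        case False
        then obtain u u' e where ue: "c = u * uf ^ e" "u' * u = 1" by (rule dvr_decomp)
        show ?thesis
        proof (cases "w \<le> e")
          case True
          define y where "y j' = (u * uf ^ (e - w)) * ((if j' = t + s then 1 else 0) - (if j' = (t + s) mod t then 1 else 0))" for j'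
          have yK: "inK y" unfolding y_def by (rule inK_elem) (use sR in auto)
          define x' where "x' = Const \<Delta> * xv y"
          have x'T: "x' \<in> TS" unfolding x'_def by (intro T_Const_mult xv_T yK)
          have ddx': "dd a (t, j) x' = \<Delta> * y j" if "j < n" for j
            using that by (simp add: x'_def dd_Const_mult dd_xv)
          have x'N: "x' \<in> NS" by (rule T_to_N[OF x'T yK ddx'])
          have x'L: "x' \<in> L" using x'N NL by blast
          have "x - x' \<in> L'" using between_diff[OF L' x] x'L sub by blast
          moreover have "\<forall>k'. s \<le> k' \<longrightarrow> k' < R \<longrightarrow> dd a (t, t + k') (x - x') = 0"
          proof (intro allI impI)
            fix k' assume k': "s \<le> k'" "k' < R"
            have lt: "t + k' < n" using k' by simp
            have md: "(t + s) mod t < t" using t_pos by simp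
            show "dd a (t, t + k') (x - x') = 0"
            proof (cases "k' = s")
              case True
              have pw: "\<Delta> * (u * uf ^ (e - w)) = u * uf ^ e"
                using \<open>w \<le> e\<close> by (simp add: power_add[symmetric] mult.left_commute)
              have ne: "t + s \<noteq> (t + s) mod t"
              proof
                assume "t + s = (t + s) mod t"
                then show False using md by linarith
              qed
              have "dd a (t, t + s) x' = \<Delta> * y (t + s)" by (rule ddx') (use sR in simp)
              also have "y (t + s) = u * uf ^ (e - w)" using ne by (simp add: y_def)
              finally have "dd a (t, t + s) x' = c" using pw ue(1) by simp
              then show ?thesis using True by (simp add: dd_diff c_def)
            next
              case False
              then have "dd a (t, t + k') x = 0" using z k' by simp
              moreover have "y (t + k') = 0"
              proof -
                have "t + k' \<noteq> (t + s) mod t"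
                proof
                  assume "t + k' = (t + s) mod t"
                  then show False using md by linarith
                qed
                moreover have "t + k' \<noteq> t + s" using False by simp
                ultimately show ?thesis by (simp add: y_def)
              qed
              moreover have "dd a (t, t + k') x' = \<Delta> * y (t + k')" by (rule ddx'[OF lt])
              ultimately show ?thesis by (simp add: dd_diff)
            qed
          qed
          ultimately have "x - x' \<in> L" using IH by blast
          then have "(x - x') + x' \<in> L" using L_add x'L by blast
          then show ?thesis by simp
        next
          case False
          then have ew: "e < w" by simp
          have x2: "Const u' * x \<in> L'" using L'_cm x by blast
          have "dd a (t, t + s) (Const u' * x) = uf ^ e"
          proof -
            have "dd a (t, t + s) (Const u' * x) = u' * c" by (simp add: dd_Const_mult c_def)
            also have "\<dots> = (u' * u) * uf ^ e" using ue(1) by (simp add: mult.assoc)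
            finally show ?thesis using ue(2) by simp
          qed
          moreover have "\<forall>k'. s < k' \<longrightarrow> k' < R \<longrightarrow> dd a (t, t + k') (Const u' * x) = 0"
            using z by (simp add: dd_Const_mult)
          ultimately have "e \<in> Sset L' s" unfolding Sset_def using ew x2 by blast
          then have "e \<in> Sset L s" using eqS[OF sR] by simp
          then obtain y where y: "y \<in> L" "dd a (t, t + s) y = uf ^ e"
            "\<forall>k'. s < k' \<longrightarrow> k' < R \<longrightarrow> dd a (t, t + k') y = 0"
            unfolding Sset_def by blast
          have uyL: "Const u * y \<in> L" using L_cm y(1) by blast
          have "x - Const u * y \<in> L'" using between_diff[OF L' x] uyL sub by blast
          moreover have "\<forall>k'. s \<le> k' \<longrightarrow> k' < R \<longrightarrow> dd a (t, t + k') (x - Const u * y) = 0"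
          proof (intro allI impI)
            fix k' assume k': "s \<le> k'" "k' < R"
            show "dd a (t, t + k') (x - Const u * y) = 0"
            proof (cases "k' = s")
              case True
              then show ?thesis using y(2) ue(1) by (simp add: dd_diff dd_Const_mult c_def)
            next
              case False
              then show ?thesis using y(3) z k' by (simp add: dd_diff dd_Const_mult)
            qed
          qed
          ultimately have "x - Const u * y \<in> L" using IH by blast
          then have "(x - Const u * y) + Const u * y \<in> L" using L_add uyL by blast
          then show ?thesis by simp
        qed
      qed
    qed
  qed
  have "L' \<subseteq> L"
  proof
    fix x assume "x \<in> L'"
    then show "x \<in> L" using claim[of R] by auto
  qed
  then show False using LL by blast
qed

lemma chain_bound:
  assumes "\<forall>i\<le>k. between_submod NS TS (L i)" "\<forall>i<k. L i \<subset> L (Suc i)"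
  shows "k \<le> R * w"
proof -
  have "i \<le> phi (L i)" if "i \<le> k" for i
    using that
  proof (induction i)
    case 0 then show ?case by simp
  next
    case (Suc i)
    then have "phi (L i) < phi (L (Suc i))"
      using assms by (intro phi_strict) auto
    then show ?case using Suc by simp
  qed
  then have "k \<le> phi (L k)" by simp
  then show ?thesis using phi_le[of "L k"] by simp
qed

end


context dsetup
begin

definition gg :: "nat \<Rightarrow> nat \<Rightarrow> nat" where
  "gg s k = w - min w (s - k * w)"

definition Lc :: "nat \<Rightarrow> 'a mpoly set" where
  "Lc s = {x \<in> TS. \<forall>k<R. uf ^ gg s k dvd dd a (t, t + k) x}"

definition Lch :: "nat \<Rightarrow> 'a mpoly set" where
  "Lch s = (if s = 0 then NS else Lc s)"

lemma N_sub_Lc: "NS \<subseteq> Lc s"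
proof
  fix x assume x: "x \<in> NS"
  have "uf ^ gg s k dvd dd a (t, t + k) x" for k
  proof -
    have "uf ^ gg s k dvd \<Delta>" by (rule le_imp_power_dvd) (simp add: gg_def)
    then show ?thesis using N_div[OF x] by (rule dvd_trans)
  qed
  then show "x \<in> Lc s" using N_T[OF x] by (simp add: Lc_def)
qed

lemma Lc_between: "between_submod NS TS (Lc s)"
  unfolding between_submod_def
proof (intro conjI ballI allI)
  show "NS \<subseteq> Lc s" by (rule N_sub_Lc)
  show "Lc s \<subseteq> TS" by (auto simp: Lc_def)
next
  fix x y assume "x \<in> Lc s" "y \<in> Lc s"
  then show "x + y \<in> Lc s" by (auto simp: Lc_def T_add dd_add)
next
  fix c x assume "x \<in> Lc s"
  then show "Const c * x \<in> Lc s" by (auto simp: Lc_def T_Const_mult dd_Const_mult)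
qed

lemma N_between: "between_submod NS TS NS"
  unfolding between_submod_def by (auto simp: N_T N_add N_Const_mult)

lemma Lch_between: "between_submod NS TS (Lch s)"
  by (simp add: Lch_def N_between Lc_between)

lemma Lc_mono: "Lc s \<subseteq> Lc (Suc s)"
proof
  fix x assume x: "x \<in> Lc s"
  have "uf ^ gg (Suc s) k dvd dd a (t, t + k) x" if "k < R" for k
  proof -
    have "gg (Suc s) k \<le> gg s k" unfolding gg_def by (intro diff_le_mono2 min.mono) auto
    then have "uf ^ gg (Suc s) k dvd uf ^ gg s k" by (rule le_imp_power_dvd)
    then show ?thesis using x that by (auto simp: Lc_def intro: dvd_trans)
  qed
  then show "x \<in> Lc (Suc s)" using x by (simp add: Lc_def)
qed

lemma Lch_sub_Lc: "Lch s \<subseteq> Lc s"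
  by (simp add: Lch_def N_sub_Lc)

lemma R_pos: "0 < R" using t_less_n by simp

lemma Lc_top: "Lc (R * w) = TS"
proof -
  have "gg (R * w) k = 0" if "k < R" for k
  proof -
    have "R * w - k * w = (R - k) * w" by (simp only: diff_mult_distrib)
    moreover have "w \<le> (R - k) * w"
    proof -
      have "1 \<le> R - k" using that by arith
      then have "1 * w \<le> (R - k) * w" by (rule mult_le_mono1)
      then show ?thesis by simp
    qed
    ultimately show ?thesis by (simp add: gg_def)
  qed
  then show ?thesis by (auto simp: Lc_def)
qed

lemma T_sub_N_w0: "w = 0 \<Longrightarrow> TS \<subseteq> NS"
proof
  fix x assume w0: "w = 0" and x: "x \<in> TS"
  show "x \<in> NS"
    by (rule T_to_N[OF x, of "\<lambda>j. dd a (t, j) x"]) (use x w0 in \<open>auto simp: T_char\<close>)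
qed

lemma witness:
  assumes s: "s < R * w"
  shows "\<exists>x. x \<in> Lc (Suc s) \<and> x \<notin> Lc s"
proof -
  have wpos: "0 < w" using s by (cases w) auto
  define q where "q = s div w"
  define e where "e = s mod w"
  have sq: "s = q * w + e" unfolding q_def e_def by (rule div_mult_mod_eq[symmetric])
  have ew: "e < w" using wpos by (simp add: e_def)
  have qR: "q < R" unfolding q_def using s by (simp add: less_mult_imp_div_less)
  define y where "y j' = uf ^ (w - Suc e) * ((if j' = t + q then 1 else 0) - (if j' = (t + q) mod t then 1 else 0))" for j'
  have yK: "inK y" unfolding y_def by (rule inK_elem) (use qR in auto)
  have md: "(t + q) mod t < t" using t_pos by simp
  have ddy: "dd a (t, t + k) (xv y) = (if k = q then uf ^ (w - Suc e) else 0)" if k: "k < R" for k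
  proof -
    have "dd a (t, t + k) (xv y) = y (t + k)" using k by (simp add: dd_xv)
    moreover have "t + k \<noteq> (t + q) mod t"
    proof
      assume "t + k = (t + q) mod t"
      then show False using md by linarith
    qed
    ultimately show ?thesis by (simp add: y_def)
  qed
  have g1: "gg (Suc s) q = w - Suc e"
  proof -
    have "Suc s - q * w = Suc e" using sq by simp
    then show ?thesis using ew by (simp add: gg_def)
  qed
  have g0: "gg s q = Suc (w - Suc e)"
  proof -
    have "s - q * w = e" using sq by simp
    then show ?thesis using ew by (simp add: gg_def)
  qed
  have "xv y \<in> Lc (Suc s)"
    unfolding Lc_def
  proof (intro CollectI conjI allI impI)
    show "xv y \<in> TS" by (rule xv_T[OF yK])
    fix k assume k: "k < R"
    show "uf ^ gg (Suc s) k dvd dd a (t, t + k) (xv y)"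
      using ddy[OF k] g1 by (cases "k = q") auto
  qed
  moreover have "xv y \<notin> Lc s"
  proof
    assume "xv y \<in> Lc s"
    then have "uf ^ gg s q dvd dd a (t, t + q) (xv y)" using qR by (simp add: Lc_def)
    moreover have "dd a (t, t + q) (xv y) = uf ^ (w - Suc e)" using ddy[OF qR] by simp
    ultimately have "uf ^ Suc (w - Suc e) dvd uf ^ (w - Suc e)" by (simp only: g0)
    then show False using uf_pow_not_dvd by blast
  qed
  ultimately show ?thesis by blast
qed

lemma main: "quot_length NS TS = enat (R * w)"
proof -
  define A where "A = {enat k | k. \<exists>L. (\<forall>i\<le>k. between_submod NS TS (L i)) \<and>
      L 0 = NS \<and> L k = TS \<and> (\<forall>i<k. L i \<subset> L (Suc i))}"
  have up: "z \<le> enat (R * w)" if "z \<in> A" for z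
    using that chain_bound unfolding A_def by fastforce
  have mem: "enat (R * w) \<in> A"
    unfolding A_def
  proof (intro CollectI exI conjI)
    show "enat (R * w) = enat (R * w)" by simp
    show "\<forall>i\<le>R * w. between_submod NS TS (Lch i)" by (simp add: Lch_between)
    show "Lch 0 = NS" by (simp add: Lch_def)
    show "Lch (R * w) = TS"
    proof (cases "R * w = 0")
      case True
      then have "w = 0" using R_pos by simp
      then have "TS = NS" using T_sub_N_w0 N_T by blast
      then show ?thesis using True by (simp add: Lch_def)
    next
      case False
      then show ?thesis by (metis Lch_def Lc_top)
    qed
    show "\<forall>i<R * w. Lch i \<subset> Lch (Suc i)"
    proof (intro allI impI)
      fix i assume i: "i < R * w"
      have "Lch i \<subseteq> Lch (Suc i)"
        using Lch_sub_Lc[of i] Lc_mono[of i] by (simp add: Lch_def)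
      moreover obtain x where "x \<in> Lc (Suc i)" "x \<notin> Lc i" using witness[OF i] by blast
      ultimately show "Lch i \<subset> Lch (Suc i)" using Lch_sub_Lc[of i] by (auto simp: Lch_def)
    qed
  qed
  have "Sup A = enat (R * w)"
    by (rule antisym[OF Sup_least[OF up] Sup_upper[OF mem]])
  then show ?thesis by (simp add: quot_length_def A_def)
qed

end

theorem lemma5p9:
  fixes uf :: "'a::idom" and m n :: nat and as :: "nat \<Rightarrow> nat"
  assumes "is_dvr_uniformiser uf"
    and "2 \<le> m" and "m \<le> n"
    and "\<And>i j. i \<le> j \<Longrightarrow> j < m - 1 \<Longrightarrow> as i \<le> as j"
  shows "quot_length (denomN m n (amat uf m as)) (torsT m n (amat uf m as))
           = enat ((n - (m - 1)) * (\<Sum>i<m - 1. as i))"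
proof -
  interpret dsetup uf m n as
    using assms(1-3) by unfold_locales
  show ?thesis by (rule main)
qed

end
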